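(* Let $j,a\in\mathbb{N}$, $r\in\mathbb{N}_0$, and $p$ a prime. Then \[c_j^{(r)}(p^a)=\binom{a+r-1}{j+r-1}.\]
   Context: For $j,n\in\mathbb{N}$, $c_j(n)$ is the number of ordered $j$-tuples of integers each $\ge 2$ with product $n$. The associated divisor functions are defined by $c_j^{(0)}=c_j$ and $c_j^{(r)}(n)=\sum_{m\mid n}c_j^{(r-1)}(m)$ for $r,n\in\mathbb{N}$. Binomial coefficients $\binom{N}{K}$ with $K>N\ge 0$ are $0$. *)

theory Defs
  imports "HOL-Computational_Algebra.Primes"
begin

text \<open>c j n: number of ordered j-tuples (lists of length j) of integers \<ge> 2 whose
  product is n. Since n \<ge> 1 forces all entries positive, natural-number entries suffice.\<close>
definition c :: "nat \<Rightarrow> nat \<Rightarrow> nat" where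
  "c j n = card {xs :: nat list. length xs = j \<and> (\<forall>x\<in>set xs. 2 \<le> x) \<and> prod_list xs = n}"

fun cr :: "nat \<Rightarrow> nat \<Rightarrow> nat \<Rightarrow> nat" where
  "cr j 0 n = c j n"
| "cr j (Suc r) n = (\<Sum>m | m dvd n. cr j r m)"

end

theory Submission
  imports Defs
begin

definition S :: "nat \<Rightarrow> nat \<Rightarrow> nat list set" where
  "S j n = {xs :: nat list. length xs = j \<and> (\<forall>x\<in>set xs. 2 \<le> x) \<and> prod_list xs = n}"

lemma c_S: "c j n = card (S j n)" by (simp add: c_def S_def)

lemma S_finite: assumes "n \<ge> 1" shows "finite (S j n)"
proof (rule finite_subset)
  show "S j n \<subseteq> {xs. set xs \<subseteq> {..n} \<and> length xs = j}"
  proof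
    fix xs assume "xs \<in> S j n"
    hence l: "length xs = j" and p: "prod_list xs = n" by (auto simp: S_def)
    have "set xs \<subseteq> {..n}"
    proof
      fix x assume "x \<in> set xs"
      hence "x dvd n" using p prod_list_dvd by blast
      thus "x \<in> {..n}" using assms by (auto intro: dvd_imp_le)
    qed
    thus "xs \<in> {xs. set xs \<subseteq> {..n} \<and> length xs = j}" using l by auto
  qed
  show "finite {xs. set xs \<subseteq> {..n} \<and> length xs = j}" by (rule finite_lists_length_eq) simp
qed

lemma S_Suc: assumes "n \<ge> 1"
  shows "S (Suc j) n = (\<Union>d\<in>{d. d dvd n \<and> 2 \<le> d}. (#) d ` S j (n div d))"
proof (intro equalityI subsetI)
  fix xs assume "xs \<in> S (Suc j) n"
  then obtain x ys where xs: "xs = x # ys" and l: "length ys = j" and x2: "2 \<le> x"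
    and ys: "\<forall>y\<in>set ys. 2 \<le> y" and p: "x * prod_list ys = n"
    by (cases xs) (auto simp: S_def)
  have "x dvd n" using p by auto
  moreover have "prod_list ys = n div x" using p x2 by auto
  ultimately show "xs \<in> (\<Union>d\<in>{d. d dvd n \<and> 2 \<le> d}. (#) d ` S j (n div d))"
    using xs l x2 ys by (auto simp: S_def)
next
  fix xs assume "xs \<in> (\<Union>d\<in>{d. d dvd n \<and> 2 \<le> d}. (#) d ` S j (n div d))"
  then obtain d ys where "d dvd n" "2 \<le> d" "ys \<in> S j (n div d)" "xs = d # ys" by auto
  thus "xs \<in> S (Suc j) n" by (auto simp: S_def)
qed

lemma c_Suc: assumes "n \<ge> 1"
  shows "c (Suc j) n = (\<Sum>d\<in>{d. d dvd n \<and> 2 \<le> d}. c j (n div d))"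
proof -
  have fD: "finite {d. d dvd n \<and> 2 \<le> (d::nat)}"
    by (rule finite_subset[of _ "{..n}"]) (use assms in \<open>auto intro: dvd_imp_le\<close>)
  have "c (Suc j) n = card (\<Union>d\<in>{d. d dvd n \<and> 2 \<le> d}. (#) d ` S j (n div d))"
    using S_Suc[OF assms] c_S by simp
  also have "\<dots> = (\<Sum>d\<in>{d. d dvd n \<and> 2 \<le> d}. card ((#) d ` S j (n div d)))"
  proof (rule card_UN_disjoint[OF fD])
    show "\<forall>i\<in>{d. d dvd n \<and> 2 \<le> d}. finite ((#) i ` S j (n div i))"
    proof
      fix i assume "i \<in> {d. d dvd n \<and> 2 \<le> d}"
      hence i: "i dvd n" "2 \<le> i" by auto
      have "i \<le> n" using i(1) assms by (intro dvd_imp_le) auto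
      hence "n div i \<ge> 1" using i(2) by (simp add: div_greater_zero_iff Suc_le_eq)
      thus "finite ((#) i ` S j (n div i))" by (intro finite_imageI S_finite)
    qed
    show "\<forall>i\<in>{d. d dvd n \<and> 2 \<le> d}. \<forall>j'\<in>{d. d dvd n \<and> 2 \<le> d}. i \<noteq> j' \<longrightarrow>
      (#) i ` S j (n div i) \<inter> (#) j' ` S j (n div j') = {}" by auto
  qed
  also have "\<dots> = (\<Sum>d\<in>{d. d dvd n \<and> 2 \<le> d}. c j (n div d))"
    by (rule sum.cong) (auto simp: c_S card_image)
  finally show ?thesis .
qed

lemma c_0: "c 0 n = (if n = 1 then 1 else 0)"
proof -
  have "S 0 n = (if n = 1 then {[]} else {})" by (auto simp: S_def)
  thus ?thesis by (simp add: c_S)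
qed

lemma sum_rev_shift: "(\<Sum>k\<in>{1..a}. f (a - k)) = (\<Sum>i<a. (f::nat\<Rightarrow>nat) i)"
  by (rule sum.reindex_bij_witness[where i="\<lambda>i. a - i" and j="\<lambda>k. a - k"]) auto

context
  fixes p :: nat
  assumes p: "prime p"
begin

lemma p_gt1: "p > 1" using p prime_gt_1_nat by blast

lemma divs_pow: "{d. d dvd p ^ a \<and> 2 \<le> d} = (\<lambda>k. p ^ k) ` {1..a}"
proof (intro equalityI subsetI)
  fix d assume "d \<in> {d. d dvd p ^ a \<and> 2 \<le> d}"
  hence d: "d dvd p ^ a" "2 \<le> d" by auto
  obtain m where "m \<le> a" "normalize d = p ^ m" using divides_primepow[OF p d(1)] by blast
  hence m: "m \<le> a" "d = p ^ m" by auto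
  with d have "m \<noteq> 0" by (cases m) auto
  thus "d \<in> (\<lambda>k. p ^ k) ` {1..a}" using m by auto
next
  fix d assume "d \<in> (\<lambda>k. p ^ k) ` {1..a}"
  then obtain k where k: "1 \<le> k" "k \<le> a" "d = p ^ k" by auto
  have "p ^ k \<ge> p ^ 1" using p_gt1 k by (intro power_increasing) auto
  hence "2 \<le> d" using p_gt1 k by auto
  moreover have "d dvd p ^ a" using k by (simp add: le_imp_power_dvd)
  ultimately show "d \<in> {d. d dvd p ^ a \<and> 2 \<le> d}" by auto
qed

lemma c_Suc_pow: "c (Suc j) (p ^ a) = (\<Sum>i<a. c j (p ^ i))"
proof -
  have pos: "p ^ a \<ge> 1" using p_gt1 by simp
  have inj: "inj_on (\<lambda>k. p ^ k) {1..a}" using p_gt1 by (auto intro!: inj_onI simp: power_inject_exp)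
  have "c (Suc j) (p ^ a) = (\<Sum>d\<in>(\<lambda>k. p ^ k) ` {1..a}. c j (p ^ a div d))"
    using c_Suc[OF pos] by (simp only: divs_pow)
  also have "\<dots> = (\<Sum>k\<in>{1..a}. c j (p ^ a div p ^ k))"
    by (rule sum.reindex_cong[OF inj]) auto
  also have "\<dots> = (\<Sum>k\<in>{1..a}. c j (p ^ (a - k)))"
    using p_gt1 by (intro sum.cong refl) (simp add: power_diff)
  also have "\<dots> = (\<Sum>i<a. c j (p ^ i))" by (rule sum_rev_shift)
  finally show ?thesis .
qed

lemma c_one: "c (Suc j) (Suc 0) = 0"
  using c_Suc_pow[of j 0] by simp

lemma c_pow: "c (Suc j) (p ^ a) = (if a = 0 then 0 else (a - 1) choose j)"
proof (induction j arbitrary: a)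
  case 0
  show ?case
  proof (induction a)
    case 0 thus ?case by (simp add: c_Suc_pow c_one)
  next
    case (Suc a)
    have "c (Suc 0) (p ^ Suc a) = c (Suc 0) (p ^ a) + c 0 (p ^ a)" by (simp only: c_Suc_pow) simp
    thus ?case using Suc p_gt1 by (simp add: c_0 c_one)
  qed
next
  case (Suc j)
  note IHj = Suc.IH
  show ?case
  proof (induction a)
    case 0 thus ?case by (simp add: c_Suc_pow c_one)
  next
    case (Suc a)
    have "c (Suc (Suc j)) (p ^ Suc a) = c (Suc (Suc j)) (p ^ a) + c (Suc j) (p ^ a)"
      by (simp only: c_Suc_pow) simp
    thus ?case using Suc.IH IHj[of a]
      by (cases a) (simp_all del: power_Suc)
  qed
qed

lemma cr_Suc_pow: "cr j (Suc r) (p ^ a) = (\<Sum>i\<le>a. cr j r (p ^ i))"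
proof -
  have inj: "inj_on (\<lambda>k. p ^ k) {..a}" using p_gt1 by (auto intro!: inj_onI simp: power_inject_exp)
  have "{m. m dvd p ^ a} = (\<lambda>k. p ^ k) ` {..a}"
  proof (intro equalityI subsetI)
    fix d assume "d \<in> {m. m dvd p ^ a}"
    then obtain m where "m \<le> a" "normalize d = p ^ m" using divides_primepow[OF p] by blast
    thus "d \<in> (\<lambda>k. p ^ k) ` {..a}" by auto
  qed (auto simp: le_imp_power_dvd)
  thus ?thesis by (simp add: sum.reindex[OF inj])
qed

lemma cr_main: assumes "j \<ge> 1" shows "cr j (Suc r) (p ^ a) = (a + r) choose (j + r)"
proof (induction r arbitrary: a)
  case 0
  obtain j' where j: "j = Suc j'" using assms by (cases j) auto
  show ?case
  proof (induction a)
    case 0 thus ?case by (simp add: cr_Suc_pow j c_pow c_one)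
  next
    case (Suc a)
    have "cr j (Suc 0) (p ^ Suc a) = cr j (Suc 0) (p ^ a) + cr j 0 (p ^ Suc a)"
      by (simp only: cr_Suc_pow) simp
    moreover have "cr j 0 (p ^ Suc a) = a choose j'" using c_pow[of j' "Suc a"] by (simp add: j del: power_Suc)
    ultimately show ?case using Suc by (simp add: j del: cr.simps power_Suc)
  qed
next
  case (Suc r)
  note IHr = Suc.IH
  show ?case
  proof (induction a)
    case 0
    have "cr j (Suc (Suc r)) (p ^ 0) = cr j (Suc r) (p ^ 0)" by (simp add: cr_Suc_pow)
    thus ?case using IHr[of 0] assms by (simp del: cr.simps)
  next
    case (Suc a)
    have "cr j (Suc (Suc r)) (p ^ Suc a) = cr j (Suc (Suc r)) (p ^ a) + cr j (Suc r) (p ^ Suc a)"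
      by (simp only: cr_Suc_pow) simp
    thus ?case using Suc.IH IHr[of "Suc a"] by (simp del: cr.simps power_Suc)
  qed
qed

end

theorem lemma15:
  fixes j a r p :: nat
  assumes "j \<ge> 1" and "a \<ge> 1" and "prime p"
  shows "cr j r (p ^ a) = (a + r - 1) choose (j + r - 1)"
proof (cases r)
  case 0
  obtain j' where j: "j = Suc j'" using assms by (cases j) auto
  show ?thesis using c_pow[OF assms(3), of j' a] assms 0 j by simp
next
  case (Suc r')
  show ?thesis using cr_main[OF assms(3) assms(1), of r' a] Suc by simp
qed

end
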